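(* The bi-immune symmetric group $G_{\mathfrak{B}}$ is highly transitive: for every $k \geq 1$ and any two $k$-tuples $(a_1, \dots, a_k)$, $(b_1, \dots, b_k)$ of natural numbers, each with pairwise distinct entries, there exists $\sigma \in G_{\mathfrak{B}}$ with $\sigma(a_i) = b_i$ for $1 \le i \le k$.
   Context: $\mathbb{N}$ denotes the non-negative integers, and $\mathrm{Sym}(\mathbb{N})$ the group of all permutations of $\mathbb{N}$ under composition ($g \circ f$ means apply $f$ first). For $i \in \mathbb{N}$, $\sigma_{(i)}$ is the permutation swapping $i$ and $i+1$ and fixing all other numbers. For $A \subseteq \mathbb{N}$ with increasing enumeration $a_0 < a_1 < \cdots$, define $\sigma_A(x) = \lim_{n \to \infty} (\sigma_{(a_0)} \circ \sigma_{(a_1)} \circ \cdots \circ \sigma_{(a_n)})(x)$ (eventually constant for each $x$). A set $A$ is immune if it is infinite and contains no infinite computably enumerable subset; $A$ is bi-immune if both $A$ and $\mathbb{N} - A$ are immune. For bi-immune $A$, $\sigma_A$ is a permutation of $\mathbb{N}$. The bi-immune symmetric group $G_{\mathfrak{B}}$ is the subgroup of $\mathrm{Sym}(\mathbb{N})$ generated by $\{\sigma_A : A \text{ bi-immune}\}$. *)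

theory Defs
  imports Main "HOL-Library.Infinite_Set" "HOL-Algebra.Bij" "HOL-Algebra.Generated_Groups"
begin

text \<open>Codes for partial recursive functions (Kleene's mu-recursive functions),
  acting on argument lists; missing arguments are read as 0.\<close>
datatype recf = Zero | Succ | Proj nat | Cn recf "recf list" | Pr recf recf | Mn recf

definition arg :: "nat \<Rightarrow> nat list \<Rightarrow> nat" where
  "arg i xs = (if i < length xs then xs ! i else 0)"

inductive rec_eval :: "recf \<Rightarrow> nat list \<Rightarrow> nat \<Rightarrow> bool" where
  zero: "rec_eval Zero xs 0"
| succ: "rec_eval Succ xs (Suc (arg 0 xs))"
| proj: "rec_eval (Proj i) xs (arg i xs)"
| cn: "list_all2 (\<lambda>g y. rec_eval g xs y) gs ys \<Longrightarrow> rec_eval f ys z \<Longrightarrow> rec_eval (Cn f gs) xs z"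
| pr0: "rec_eval f xs z \<Longrightarrow> rec_eval (Pr f g) (0 # xs) z"
| prS: "rec_eval (Pr f g) (n # xs) y \<Longrightarrow> rec_eval g (n # y # xs) z \<Longrightarrow> rec_eval (Pr f g) (Suc n # xs) z"
| mn: "rec_eval f (n # xs) 0 \<Longrightarrow> (\<forall>m<n. \<exists>y. 0 < y \<and> rec_eval f (m # xs) y) \<Longrightarrow> rec_eval (Mn f) xs n"

definition ce :: "nat set \<Rightarrow> bool" where
  "ce A \<longleftrightarrow> (\<exists>f. A = {x. \<exists>y. rec_eval f [x] y})"

definition immune :: "nat set \<Rightarrow> bool" where
  "immune A \<longleftrightarrow> infinite A \<and> \<not> (\<exists>B. B \<subseteq> A \<and> infinite B \<and> ce B)"

definition bi_immune :: "nat set \<Rightarrow> bool" where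
  "bi_immune A \<longleftrightarrow> immune A \<and> immune (UNIV - A)"

definition adj_swap :: "nat \<Rightarrow> nat \<Rightarrow> nat" where
  "adj_swap i x = (if x = i then Suc i else if x = Suc i then i else x)"

fun prefix_comp :: "nat set \<Rightarrow> nat \<Rightarrow> nat \<Rightarrow> nat" where
  "prefix_comp A 0 = adj_swap (enumerate A 0)"
| "prefix_comp A (Suc n) = prefix_comp A n \<circ> adj_swap (enumerate A (Suc n))"

definition sigma_set :: "nat set \<Rightarrow> nat \<Rightarrow> nat" where
  "sigma_set A x = (THE y. eventually (\<lambda>n. prefix_comp A n x = y) sequentially)"

definition G_B :: "(nat \<Rightarrow> nat) set" where
  "G_B = generate (BijGroup (UNIV :: nat set)) {sigma_set A | A. bi_immune A}"

end

theory Submission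
  imports Defs "HOL-Library.Countable"
begin


instance recf :: countable by countable_datatype

definition Dom :: "recf \<Rightarrow> nat set" where
  "Dom f = {x. \<exists>y. rec_eval f [x] y}"

definition pick :: "nat \<Rightarrow> nat set \<Rightarrow> nat \<times> nat" where
  "pick m S = (if infinite S then SOME p. m \<le> fst p \<and> fst p < snd p \<and> fst p \<in> S \<and> snd p \<in> S
               else (m, Suc m))"

lemma pick_prop:
  "m \<le> fst (pick m S) \<and> fst (pick m S) < snd (pick m S) \<and>
   (infinite S \<longrightarrow> fst (pick m S) \<in> S \<and> snd (pick m S) \<in> S)"
proof (cases "infinite S")
  case True
  from True obtain x where x: "x \<in> S" "m \<le> x"
    unfolding infinite_nat_iff_unbounded_le by auto
  moreover from True obtain y where "y \<in> S" "Suc x \<le> y"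
    unfolding infinite_nat_iff_unbounded_le by auto
  ultimately have ex: "\<exists>p. m \<le> fst p \<and> fst p < snd p \<and> fst p \<in> S \<and> snd p \<in> S"
    by (intro exI[of _ "(x,y)"]) auto
  have "pick m S = (SOME p. m \<le> fst p \<and> fst p < snd p \<and> fst p \<in> S \<and> snd p \<in> S)"
    using True unfolding pick_def by simp
  then show ?thesis using someI_ex[OF ex] by simp
qed (simp add: pick_def)

fun stage :: "nat \<Rightarrow> nat \<Rightarrow> nat \<times> nat" where
  "stage c 0 = pick c (Dom (from_nat 0))"
| "stage c (Suc n) = pick (Suc (snd (stage c n))) (Dom (from_nat (Suc n)))"

lemma stage_prop: "fst (stage c n) < snd (stage c n) \<and>
   (infinite (Dom (from_nat n)) \<longrightarrow> fst (stage c n) \<in> Dom (from_nat n) \<and> snd (stage c n) \<in> Dom (from_nat n))"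
  by (cases n) (simp_all add: pick_prop)

lemma stage_next: "snd (stage c n) < fst (stage c (Suc n))"
  using pick_prop[of "Suc (snd (stage c n))"] by (simp add: Suc_le_eq)

lemma stage_c: "c \<le> fst (stage c n)"
proof (induction n)
  case 0 then show ?case using pick_prop by simp
next
  case (Suc n) then show ?case using stage_next[of c n] stage_prop[of c n] by linarith
qed

lemma fst_mono: "strict_mono (\<lambda>n. fst (stage c n))"
  unfolding strict_mono_Suc_iff by (meson less_trans stage_next stage_prop)

lemma snd_mono: "strict_mono (\<lambda>n. snd (stage c n))"
  unfolding strict_mono_Suc_iff by (meson less_trans stage_next stage_prop)

lemma snd_not_fst: "snd (stage c n) \<noteq> fst (stage c m)"
proof (cases "m \<le> n")
  case True
  then have "fst (stage c m) \<le> fst (stage c n)" using strict_mono_less_eq[OF fst_mono[of c]] by blast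
  then show ?thesis using stage_prop[of c n] by linarith
next
  case False
  then have "fst (stage c (Suc n)) \<le> fst (stage c m)" using strict_mono_less_eq[OF fst_mono[of c], of "Suc n" m] by simp
  then show ?thesis using stage_next[of c n] by linarith
qed

lemma no_ce_sub:
  assumes "ce B" "infinite B" "\<And>n. P n \<in> B \<Longrightarrow> False"
    "\<And>n. infinite (Dom (from_nat n)) \<Longrightarrow> P n \<in> Dom (from_nat n)"
  shows False
proof -
  obtain f where f: "B = Dom f" using assms(1) unfolding ce_def Dom_def by blast
  have e: "Dom (from_nat (to_nat f)) = B" using f by simp
  have "P (to_nat f) \<in> B" using assms(4)[of "to_nat f"] assms(2) unfolding e by blast
  then show False by (rule assms(3))
qed

lemma bi_immune_S:
  assumes "range (\<lambda>n. fst (stage c n)) \<subseteq> S" "range (\<lambda>n. snd (stage c n)) \<inter> S = {}"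
  shows "bi_immune S"
proof -
  have i1: "infinite S"
    using assms(1) fst_mono[of c] by (meson finite_subset range_inj_infinite strict_mono_imp_inj_on)
  have s2: "range (\<lambda>n. snd (stage c n)) \<subseteq> UNIV - S" using assms(2) by blast
  have i2: "infinite (UNIV - S)"
    using s2 snd_mono[of c] by (meson finite_subset range_inj_infinite strict_mono_imp_inj_on)
  have n1: "\<not> (\<exists>B. B \<subseteq> S \<and> infinite B \<and> ce B)"
  proof
    assume "\<exists>B. B \<subseteq> S \<and> infinite B \<and> ce B"
    then obtain B where B: "B \<subseteq> S" "infinite B" "ce B" by blast
    show False
      by (rule no_ce_sub[OF B(3) B(2), of "\<lambda>n. snd (stage c n)"])
        (use B(1) assms(2) in blast, use stage_prop in simp)
  qed
  have n2: "\<not> (\<exists>B. B \<subseteq> UNIV - S \<and> infinite B \<and> ce B)"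
  proof
    assume "\<exists>B. B \<subseteq> UNIV - S \<and> infinite B \<and> ce B"
    then obtain B where B: "B \<subseteq> UNIV - S" "infinite B" "ce B" by blast
    show False
      by (rule no_ce_sub[OF B(3) B(2), of "\<lambda>n. fst (stage c n)"])
        (use B(1) assms(1) in blast, use stage_prop in simp)
  qed
  show ?thesis unfolding bi_immune_def immune_def using i1 i2 n1 n2 by blast
qed

definition XX :: "nat \<Rightarrow> nat set" where "XX c = range (\<lambda>n. fst (stage c n))"

lemma XX_bi: "bi_immune (XX c)"
  unfolding XX_def by (rule bi_immune_S) (auto simp: disjoint_iff, metis snd_not_fst)

lemma XX_ins_bi: "i < c \<Longrightarrow> bi_immune (insert i (XX c))"
  unfolding XX_def
  apply (rule bi_immune_S[of c]) apply auto
  using stage_c stage_prop apply (metis le_less_trans less_asym)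
  using snd_not_fst by metis

lemma XX_ge: "x \<in> XX c \<Longrightarrow> c \<le> x"
  unfolding XX_def using stage_c by auto



lemma adj_swap_inv[simp]: "adj_swap i (adj_swap i x) = x"
  unfolding adj_swap_def by auto

lemma bij_adj: "bij (adj_swap i)"
  by (rule o_bij[where g="adj_swap i"]) (auto simp: fun_eq_iff)

lemma prefix_bij: "bij (prefix_comp A n)"
proof (induction n)
  case 0 show ?case unfolding prefix_comp.simps(1) by (rule bij_adj)
next
  case (Suc n) show ?case unfolding prefix_comp.simps(2) by (rule bij_comp[OF bij_adj Suc.IH])
qed

lemma stable:
  assumes "infinite A" "x \<le> n" "n \<le> m"
  shows "prefix_comp A m x = prefix_comp A n x"
  using assms(3)
proof (induction m rule: dec_induct)
  case base then show ?case by simp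
next
  case (step m)
  have "Suc m \<le> enumerate A (Suc m)" using le_enumerate[OF assms(1)] .
  then have "adj_swap (enumerate A (Suc m)) x = x"
    using assms(2) step(1) unfolding adj_swap_def by auto
  then show ?case using step by simp
qed

lemma sigma_eq:
  assumes "infinite A" "x \<le> n"
  shows "sigma_set A x = prefix_comp A n x"
  unfolding sigma_set_def
proof (rule the_equality)
  show "eventually (\<lambda>m. prefix_comp A m x = prefix_comp A n x) sequentially"
    unfolding eventually_sequentially by (intro exI[of _ n] allI impI stable[OF assms])
next
  fix y assume "eventually (\<lambda>m. prefix_comp A m x = y) sequentially"
  then obtain N where N: "\<And>m. m \<ge> N \<Longrightarrow> prefix_comp A m x = y"
    unfolding eventually_sequentially by blast
  have "prefix_comp A (max N n) x = prefix_comp A n x" by (rule stable[OF assms]) simp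
  then show "y = prefix_comp A n x" using N[of "max N n"] by simp
qed

lemma sigma_inj: assumes "infinite A" shows "inj (sigma_set A)"
proof (rule injI)
  fix x y assume "sigma_set A x = sigma_set A y"
  then have "prefix_comp A (max x y) x = prefix_comp A (max x y) y"
    using sigma_eq[OF assms, of x "max x y"] sigma_eq[OF assms, of y "max x y"] by simp
  then show "x = y" using prefix_bij[of A "max x y"] unfolding bij_def inj_def by blast
qed

lemma adj_le: "e \<noteq> g \<Longrightarrow> x \<le> g \<Longrightarrow> adj_swap e x \<le> g"
  unfolding adj_swap_def by auto

lemma prefix_le:
  assumes "infinite A" "g \<notin> A"
  shows "x \<le> g \<Longrightarrow> prefix_comp A n x \<le> g"
proof (induction n arbitrary: x)
  case 0
  have "enumerate A 0 \<noteq> g" using enumerate_in_set[OF assms(1)] assms(2) by metis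
  then show ?case using adj_le 0 by simp
next
  case (Suc n)
  have "enumerate A (Suc n) \<noteq> g" using enumerate_in_set[OF assms(1)] assms(2) by metis
  then show ?case using adj_le Suc by simp
qed

lemma sigma_bij:
  assumes "infinite A" "infinite (UNIV - A)"
  shows "bij (sigma_set A)"
proof (rule bijI)
  show "inj (sigma_set A)" by (rule sigma_inj[OF assms(1)])
  show "surj (sigma_set A)"
  proof -
    have "z \<in> range (sigma_set A)" for z
    proof -
    obtain g where g: "g \<in> UNIV - A" "z \<le> g"
      using assms(2) unfolding infinite_nat_iff_unbounded_le by blast
    have sub: "sigma_set A ` {..g} \<subseteq> {..g}"
    proof
      fix y assume "y \<in> sigma_set A ` {..g}"
      then obtain x where x: "x \<le> g" "y = sigma_set A x" by auto
      then show "y \<in> {..g}" using sigma_eq[OF assms(1), of x x] prefix_le[OF assms(1), of g x x] g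
        by simp
    qed
    have "sigma_set A ` {..g} = {..g}"
      by (rule endo_inj_surj[OF finite_atMost sub inj_on_subset[OF sigma_inj[OF assms(1)] subset_UNIV]])
    then show "z \<in> range (sigma_set A)" using g by auto
    qed
    then show ?thesis by auto
  qed
qed

lemma enum_ins:
  assumes "i \<notin> A" "\<forall>a\<in>A. i < a"
  shows "enumerate (insert i A) 0 = i" "enumerate (insert i A) (Suc n) = enumerate A n"
proof -
  have "(LEAST n. n \<in> insert i A) = i"
    by (rule Least_equality) (use assms in \<open>auto simp: less_imp_le\<close>)
  then show e0: "enumerate (insert i A) 0 = i" by (simp only: enumerate_0)
  have "insert i A - {i} = A" using assms(1) by auto
  then show "enumerate (insert i A) (Suc n) = enumerate A n"
    by (simp only: enumerate_Suc' e0)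
qed

lemma prefix_ins:
  assumes "i \<notin> A" "\<forall>a\<in>A. i < a"
  shows "prefix_comp (insert i A) (Suc n) = adj_swap i \<circ> prefix_comp A n"
proof (induction n)
  case 0 show ?case by (simp only: prefix_comp.simps enum_ins[OF assms])
next
  case (Suc n)
  have "prefix_comp (insert i A) (Suc (Suc n)) = prefix_comp (insert i A) (Suc n) \<circ> adj_swap (enumerate A (Suc n))"
    by (simp only: prefix_comp.simps enum_ins[OF assms])
  also have "\<dots> = (adj_swap i \<circ> prefix_comp A n) \<circ> adj_swap (enumerate A (Suc n))" by (simp only: Suc.IH)
  also have "\<dots> = adj_swap i \<circ> prefix_comp A (Suc n)" by (simp only: prefix_comp.simps comp_assoc)
  finally show ?case .
qed

lemma sigma_ins:
  assumes "i \<notin> A" "\<forall>a\<in>A. i < a" "infinite A"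
  shows "sigma_set (insert i A) x = adj_swap i (sigma_set A x)"
proof -
  have "sigma_set (insert i A) x = prefix_comp (insert i A) (Suc x) x"
    using assms(3) by (intro sigma_eq) auto
  also have "\<dots> = adj_swap i (prefix_comp A x x)" using prefix_ins[OF assms(1,2)] by simp
  also have "\<dots> = adj_swap i (sigma_set A x)" using sigma_eq[OF assms(3), of x x] by simp
  finally show ?thesis .
qed



abbreviation "GG \<equiv> BijGroup (UNIV :: nat set)"

lemma Bij_UNIV: "f \<in> Bij (UNIV::nat set) \<longleftrightarrow> bij f"
  unfolding Bij_def extensional_def by auto

lemma mult_GG: "f \<in> Bij UNIV \<Longrightarrow> g \<in> Bij UNIV \<Longrightarrow> mult GG f g = f \<circ> g"
  unfolding BijGroup_def compose_def by (simp add: restrict_def comp_def)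

lemma one_GG: "one GG = id"
  unfolding BijGroup_def by (simp add: restrict_def id_def)

lemma inv_GG: "f \<in> Bij UNIV \<Longrightarrow> m_inv GG f = inv_into UNIV f"
  by (simp add: inv_BijGroup restrict_def)

lemma H_carrier: "{sigma_set A | A. bi_immune A} \<subseteq> carrier GG"
proof
  fix f assume "f \<in> {sigma_set A | A. bi_immune A}"
  then obtain A where A: "f = sigma_set A" "bi_immune A" by blast
  have "bij f" using A sigma_bij unfolding bi_immune_def immune_def by blast
  then show "f \<in> carrier GG" by (simp add: BijGroup_def Bij_UNIV)
qed

lemma GB_sub: "subgroup G_B GG"
  unfolding G_B_def by (rule group.generate_is_subgroup[OF group_BijGroup H_carrier])

lemma GB_bij: "f \<in> G_B \<Longrightarrow> bij f"
  using subgroup.mem_carrier[OF GB_sub] by (simp add: BijGroup_def Bij_UNIV)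

lemma GB_comp: "f \<in> G_B \<Longrightarrow> g \<in> G_B \<Longrightarrow> f \<circ> g \<in> G_B"
  using subgroup.m_closed[OF GB_sub, of f g] GB_bij mult_GG Bij_UNIV by metis

lemma GB_id: "id \<in> G_B"
  using subgroup.one_closed[OF GB_sub] one_GG by simp

lemma adj_in: "adj_swap i \<in> G_B"
proof -
  define A where "A = XX (Suc i)"
  have iA: "i \<notin> A" and lt: "\<forall>a\<in>A. i < a" using XX_ge[of _ "Suc i"] unfolding A_def by (force, auto simp: less_eq_Suc_le)
  have bA: "bi_immune A" unfolding A_def by (rule XX_bi)
  have bA': "bi_immune (insert i A)" unfolding A_def by (rule XX_ins_bi) simp
  have infA: "infinite A" "infinite (UNIV - A)" using bA unfolding bi_immune_def immune_def by auto
  have bij: "bij (sigma_set A)" by (rule sigma_bij[OF infA])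
  have s': "sigma_set (insert i A) = adj_swap i \<circ> sigma_set A"
    using sigma_ins[OF iA lt infA(1)] by (simp add: fun_eq_iff)
  have bij': "bij (sigma_set (insert i A))" unfolding s' by (rule bij_comp[OF bij bij_adj])
  have g1: "sigma_set (insert i A) \<in> G_B" unfolding G_B_def by (rule generate.incl) (use bA' in blast)
  have g2: "m_inv GG (sigma_set A) \<in> G_B" unfolding G_B_def by (rule generate.inv) (use bA in blast)
  have "mult GG (sigma_set (insert i A)) (m_inv GG (sigma_set A)) \<in> G_B"
    unfolding G_B_def by (rule generate.eng[OF g1[unfolded G_B_def] g2[unfolded G_B_def]])
  moreover have "m_inv GG (sigma_set A) = inv_into UNIV (sigma_set A)" using bij inv_GG Bij_UNIV by blast
  moreover have "bij (inv_into UNIV (sigma_set A))" using bij by (simp add: bij_imp_bij_inv)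
  ultimately have "sigma_set (insert i A) \<circ> inv_into UNIV (sigma_set A) \<in> G_B"
    using mult_GG Bij_UNIV bij' by metis
  moreover have "sigma_set (insert i A) \<circ> inv_into UNIV (sigma_set A) = adj_swap i"
  proof -
    have "sigma_set A \<circ> inv_into UNIV (sigma_set A) = id" using bij bij_is_surj surj_iff by blast
    then show ?thesis unfolding s' by (simp add: comp_assoc)
  qed
  ultimately show ?thesis by simp
qed

definition tr :: "nat \<Rightarrow> nat \<Rightarrow> nat \<Rightarrow> nat" where
  "tr a b x = (if x = a then b else if x = b then a else x)"

lemma tr_step: "a < b \<Longrightarrow> tr a (Suc b) = adj_swap b \<circ> tr a b \<circ> adj_swap b"
  unfolding tr_def adj_swap_def by (auto simp: fun_eq_iff)

lemma tr_base: "tr a (Suc a) = adj_swap a"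
  unfolding tr_def adj_swap_def by (auto simp: fun_eq_iff)

lemma tr_refl: "tr a a = id"
  unfolding tr_def by (auto simp: fun_eq_iff)

lemma tr_sym: "tr a b = tr b a"
  unfolding tr_def by (auto simp: fun_eq_iff)

lemma tr_in_le: "a \<le> b \<Longrightarrow> tr a b \<in> G_B"
proof (induction b rule: dec_induct)
  case base then show ?case using GB_id tr_refl by metis
next
  case (step b)
  show ?case
  proof (cases "a = b")
    case True then show ?thesis using tr_base adj_in by simp
  next
    case False
    then have "a < b" using step(1) by simp
    then show ?thesis using tr_step GB_comp adj_in step(3) by metis
  qed
qed

lemma tr_in: "tr a b \<in> G_B"
  using tr_in_le[of a b] tr_in_le[of b a] tr_sym[of a b] by (cases "a \<le> b") auto

lemma main_aux:
  "length as = length bs \<Longrightarrow> distinct as \<Longrightarrow> distinct bs \<Longrightarrow>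
   \<exists>\<sigma>\<in>G_B. \<forall>i<length as. \<sigma> (as ! i) = bs ! i"
proof (induction as arbitrary: bs)
  case Nil then show ?case using GB_id by auto
next
  case (Cons a as)
  then obtain b bs' where bs: "bs = b # bs'" by (cases bs) auto
  have "length as = length bs'" "distinct as" "distinct bs'" using Cons.prems bs by auto
  then obtain s where s: "s \<in> G_B" "\<forall>i<length as. s (as ! i) = bs' ! i" using Cons.IH by blast
  define c where "c = s a"
  have injs: "inj s" using GB_bij[OF s(1)] bij_is_inj by blast
  have "\<forall>i<length (a # as). (tr c b \<circ> s) ((a # as) ! i) = bs ! i"
  proof (intro allI impI)
    fix i assume i: "i < length (a # as)"
    show "(tr c b \<circ> s) ((a # as) ! i) = bs ! i"
    proof (cases i)
      case 0 then show ?thesis by (simp add: bs c_def tr_def)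
    next
      case (Suc j)
      then have j: "j < length as" using i by simp
      have "a \<noteq> as ! j" using Cons.prems(2) j by (metis distinct.simps(2) nth_mem)
      then have "s (as ! j) \<noteq> c" unfolding c_def using injs by (metis injD)
      moreover have "bs' ! j \<noteq> b" using Cons.prems(3) bs j \<open>length as = length bs'\<close>
        by (metis distinct.simps(2) nth_mem)
      ultimately show ?thesis using s(2) j Suc bs by (simp add: tr_def)
    qed
  qed
  then show ?case using GB_comp[OF tr_in s(1)] by blast
qed


theorem mainTheorem7:
  fixes as bs :: "nat list" and k :: nat
  assumes "k \<ge> 1" and "length as = k" and "length bs = k"
    and "distinct as" and "distinct bs"
  shows "\<exists>\<sigma>\<in>G_B. \<forall>i<k. \<sigma> (as ! i) = bs ! i"
  using main_aux[of as bs] assms by simp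

end
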